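(* Let $d\ge1$ and $N>0$. For $\rho_z>0$ let $$G_{\rho_z}(r)=1-\frac1N\left(\frac{\rho_z}{r}\right)^{d/2}J_{d/2}(2\pi\rho_z r),\qquad r>0,$$ be the pair correlation function of a step blue noise pattern of $N$ samples in $d$ dimensions with zero region $\rho_z$. Call $\rho_z$ realizable if $G_{\rho_z}(r)\ge0$ for all $r>0$. Then the maximum realizable zero region is $$\rho_z^*=\left(\frac{N\,\Gamma\!\left(1+\frac d2\right)}{\pi^{d/2}}\right)^{1/d},$$ i.e. the inverse of the $d$-th root of the volume of a $d$-dimensional ball of radius $N^{-1/d}$. Equivalently, the minimum number of samples needed to realize a step blue noise pattern with zero region $\rho_z$ is $N=\pi^{d/2}\rho_z^d/\Gamma(1+d/2)$.
   Context: A step blue noise pattern with zero region $\rho_z$ is a sampling pattern whose radial power spectrum is $0$ for frequencies $\rho\le\rho_z$ and $1$ for $\rho>\rho_z$ (so its power spectrum is automatically nonnegative); its pair correlation function is the $G_{\rho_z}$ given in the claim. $J_{d/2}$ denotes the Bessel function of the first kind of order $d/2$ and $\Gamma$ the gamma function. Realizability of a sampling pattern requires nonnegativity of its power spectrum and of its pair correlation function. *)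

theory Defs
  imports "HOL-Analysis.Analysis"
begin

definition besselJ :: "real \<Rightarrow> real \<Rightarrow> real" where
  "besselJ nu x = (\<Sum>m. (-1) ^ m / (fact m * Gamma (real m + nu + 1)) * (x / 2) powr (2 * real m + nu))"

definition stepPCF :: "nat \<Rightarrow> real \<Rightarrow> real \<Rightarrow> real \<Rightarrow> real" where
  "stepPCF d N rho r = 1 - (1 / N) * (rho / r) powr (real d / 2) * besselJ (real d / 2) (2 * pi * rho * r)"

definition realizable :: "nat \<Rightarrow> real \<Rightarrow> real \<Rightarrow> bool" where
  "realizable d N rho \<longleftrightarrow> rho > 0 \<and> (\<forall>r>0. stepPCF d N rho r \<ge> 0)"

end

theory Submission imports Defs begin

definition cc :: "real \<Rightarrow> nat \<Rightarrow> real" where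
  "cc nu n = (-1)^n / (4^n * fact n * Gamma (real n + nu + 1))"

definition gg :: "real \<Rightarrow> real \<Rightarrow> real" where
  "gg nu y = (\<Sum>n. cc nu n * y^n)"

lemma cc_rec:
  assumes "nu \<ge> 0"
  shows "cc nu (Suc n) = - cc nu n / (4 * (real n + 1) * (real n + nu + 1))"
proof -
  have G: "Gamma (real (Suc n) + nu + 1) = (real n + nu + 1) * Gamma (real n + nu + 1)"
  proof -
    have "real n + nu + 1 \<notin> \<int>\<^sub>\<le>\<^sub>0" using assms by (auto elim!: nonpos_Ints_cases)
    then show ?thesis using Gamma_plus1[of "real n + nu + 1"] by (simp add: add_ac)
  qed
  have "Gamma (real n + nu + 1) > 0" using assms by (intro Gamma_real_pos) simp
  moreover have "real n + nu + 1 > 0" using assms by simp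
  ultimately show ?thesis unfolding cc_def G
    by (simp add: field_simps)
qed

lemma cc_summable:
  assumes "nu \<ge> 0"
  shows "summable (\<lambda>n. cc nu n * y^n)"
proof (rule summable_ratio_test[where c="1/2" and N="nat \<lceil>\<bar>y\<bar>\<rceil>"])
  fix n assume n: "nat \<lceil>\<bar>y\<bar>\<rceil> \<le> n"
  have ny: "\<bar>y\<bar> \<le> real n" using n by linarith
  have pos: "4 * (real n + 1) * (real n + nu + 1) > 0" using assms by simp
  have "norm (cc nu (Suc n) * y ^ Suc n) = \<bar>cc nu n * y^n\<bar> * (\<bar>y\<bar> / (4 * (real n + 1) * (real n + nu + 1)))"
    using pos by (simp add: cc_rec[OF assms] abs_mult power_abs field_simps)
  also have "\<dots> \<le> \<bar>cc nu n * y^n\<bar> * (1/2)"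
  proof (rule mult_left_mono)
    have "\<bar>y\<bar> \<le> 4 * (real n + 1) * (real n + nu + 1) / 2"
    proof -
      have "(real n+1) * 1 \<le> (real n+1)*(real n+nu+1)" using assms by (intro mult_left_mono) auto
      define P where "P = (real n + 1) * (real n + nu + 1)"
      have e: "4 * (real n + 1) * (real n + nu + 1) / 2 = 2 * P" unfolding P_def by simp
      have "real n + 1 \<le> P" using \<open>(real n+1) * 1 \<le> (real n+1)*(real n+nu+1)\<close> unfolding P_def by simp
      then have "\<bar>y\<bar> \<le> 2 * P" using ny by linarith
      then show ?thesis using e by simp
    qed
    then show "\<bar>y\<bar> / (4 * (real n + 1) * (real n + nu + 1)) \<le> 1/2"
      using pos by (simp add: divide_le_eq)
  qed simp
  finally show "norm (cc nu (Suc n) * y ^ Suc n) \<le> 1/2 * norm (cc nu n * y^n)" by simp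
qed simp

definition g1 :: "real \<Rightarrow> real \<Rightarrow> real" where
  "g1 nu y = (\<Sum>n. diffs (cc nu) n * y^n)"
definition g2 :: "real \<Rightarrow> real \<Rightarrow> real" where
  "g2 nu y = (\<Sum>n. diffs (diffs (cc nu)) n * y^n)"

lemma s1: "nu \<ge> 0 \<Longrightarrow> summable (\<lambda>n. diffs (cc nu) n * y^n)"
  by (rule termdiff_converges_all) (rule cc_summable)
lemma s2: "nu \<ge> 0 \<Longrightarrow> summable (\<lambda>n. diffs (diffs (cc nu)) n * y^n)"
  by (rule termdiff_converges_all) (rule s1)

lemma d0: "nu \<ge> 0 \<Longrightarrow> (gg nu has_field_derivative g1 nu y) (at y)"
  unfolding gg_def g1_def
  by (rule termdiffs_strong_converges_everywhere) (rule cc_summable)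
lemma d1: "nu \<ge> 0 \<Longrightarrow> (g1 nu has_field_derivative g2 nu y) (at y)"
  unfolding g1_def g2_def
  by (rule termdiffs_strong_converges_everywhere) (rule s1)

lemma ode:
  assumes "nu \<ge> 0"
  shows "4 * y * g2 nu y + 4 * (nu + 1) * g1 nu y + gg nu y = 0"
proof -
  let ?c = "cc nu"
  have a: "(\<lambda>n. diffs (diffs ?c) n * y^n) sums g2 nu y"
    unfolding g2_def using s2[OF assms] by (rule summable_sums)
  have "(\<lambda>n. y * (diffs (diffs ?c) n * y^n)) sums (y * g2 nu y)"
    by (rule sums_mult[OF a])
  then have "(\<lambda>n. (\<lambda>n. real n * diffs ?c n * y^n) (Suc n)) sums (y * g2 nu y)"
    by (simp add: diffs_def mult_ac)
  then have b: "(\<lambda>n. real n * diffs ?c n * y^n) sums (y * g2 nu y)"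
    by (subst (asm) sums_Suc_iff) simp
  have c: "(\<lambda>n. diffs ?c n * y^n) sums g1 nu y"
    unfolding g1_def using s1[OF assms] by (rule summable_sums)
  have e: "(\<lambda>n. ?c n * y^n) sums gg nu y"
    unfolding gg_def using cc_summable[OF assms] by (rule summable_sums)
  have f: "(\<lambda>n. 4 * (real n * diffs ?c n * y^n) + 4 * (nu + 1) * (diffs ?c n * y^n) + ?c n * y^n)
     sums (4 * (y * g2 nu y) + 4 * (nu + 1) * g1 nu y + gg nu y)"
    by (intro sums_add sums_mult b c e)
  have z: "4 * (real n * diffs ?c n * y^n) + 4 * (nu + 1) * (diffs ?c n * y^n) + ?c n * y^n = 0" for n
  proof -
    define D where "D = 4 * (real n + 1) * (real n + nu + 1)"
    have Dnz: "D \<noteq> 0" unfolding D_def using assms by simp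
    have "?c (Suc n) * D = - ?c n / D * D" using cc_rec[OF assms, of n] unfolding D_def by simp
    also have "\<dots> = - ?c n" using Dnz by simp
    finally have D1: "?c (Suc n) * D = - ?c n" .
    have "4 * (real n + nu + 1) * diffs ?c n = ?c (Suc n) * D"
      unfolding D_def by (simp add: diffs_def algebra_simps)
    then have H: "4 * (real n + nu + 1) * diffs ?c n + ?c n = 0" using D1 by simp
    have "4 * (real n * diffs ?c n * y^n) + 4 * (nu + 1) * (diffs ?c n * y^n) + ?c n * y^n
       = (4 * (real n + nu + 1) * diffs ?c n + ?c n) * y^n" by (simp add: algebra_simps)
    then show ?thesis using H by simp
  qed
  from f have "(\<lambda>n. 0::real) sums (4 * (y * g2 nu y) + 4 * (nu + 1) * g1 nu y + gg nu y)"
    by (simp only: z)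
  then have "4 * (y * g2 nu y) + 4 * (nu + 1) * g1 nu y + gg nu y = 0"
    using sums_unique2 sums_zero by blast
  then show ?thesis by (simp add: mult_ac)
qed

lemma gg0: "gg nu 0 = 1 / Gamma (nu + 1)"
  by (simp only: gg_def powser_zero) (simp add: cc_def)

lemma gg_bound:
  assumes "nu \<ge> 0" "y \<ge> 0"
  shows "gg nu y \<le> 1 / Gamma (nu + 1)"
proof -
  define E where "E = (\<lambda>y. (gg nu y)^2 + 4 * y * (g1 nu y)^2)"
  have dE: "(E has_real_derivative (2 * gg nu x * g1 nu x + (4 * (g1 nu x)^2 + 4 * x * (2 * g1 nu x * g2 nu x)))) (at x)" for x
    unfolding E_def
    by (auto intro!: derivative_eq_intros d0[OF assms(1)] d1[OF assms(1)] simp: algebra_simps)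
  have "2 * gg nu x * g1 nu x + (4 * (g1 nu x)^2 + 4 * x * (2 * g1 nu x * g2 nu x))
      = - (4 + 8 * nu) * (g1 nu x)^2" for x
  proof -
    have "4 * x * g2 nu x = - 4 * (nu + 1) * g1 nu x - gg nu x" using ode[OF assms(1), of x] by linarith
    then have "4 * x * (2 * g1 nu x * g2 nu x) = 2 * g1 nu x * (- 4 * (nu + 1) * g1 nu x - gg nu x)"
      by (metis mult.assoc mult.left_commute)
    then show ?thesis by (simp add: algebra_simps power2_eq_square)
  qed
  moreover have "- (4 + 8 * nu) * (g1 nu x)^2 \<le> 0" for x using assms(1) by (intro mult_nonpos_nonneg) auto
  ultimately have "E y \<le> E 0"
    using dE by (intro DERIV_nonpos_imp_nonincreasing[OF assms(2)]) metis
  then have "(gg nu y)^2 + 4 * y * (g1 nu y)^2 \<le> (gg nu 0)^2"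
    unfolding E_def by simp
  moreover have "0 \<le> 4 * y * (g1 nu y)^2" using assms(2) by simp
  ultimately have "(gg nu y)^2 \<le> (gg nu 0)^2" by linarith
  then have "\<bar>gg nu y\<bar> \<le> \<bar>gg nu 0\<bar>" by (simp add: abs_le_square_iff)
  moreover have "Gamma (nu + 1) > 0" using assms(1) by (intro Gamma_real_pos) simp
  ultimately show ?thesis unfolding gg0 by simp
qed

lemma bessel_gg:
  assumes "nu \<ge> 0" "x > 0"
  shows "besselJ nu x = (x/2) powr nu * gg nu (x^2)"
proof -
  have t: "(-1) ^ m / (fact m * Gamma (real m + nu + 1)) * (x / 2) powr (2 * real m + nu)
        = (x/2) powr nu * (cc nu m * (x^2)^m)" for m
  proof -
    have "(x / 2) powr (2 * real m + nu) = (x/2) powr (real (2*m)) * (x/2) powr nu"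
      by (simp add: powr_add)
    also have "\<dots> = (x/2)^(2*m) * (x/2) powr nu" using assms(2) powr_realpow[of "x/2" "2*m"] by simp
    also have "(x/2)^(2*m) = (x^2)^m / 4^m" by (simp add: power_mult power_divide)
    finally have F: "(x / 2) powr (2 * real m + nu) = (x^2)^m / 4^m * (x/2) powr nu" .
    show ?thesis by (simp only: F cc_def) (simp add: field_simps)
  qed
  show ?thesis unfolding besselJ_def gg_def t
    by (rule suminf_mult[OF cc_summable[OF assms(1)]])
qed

lemma pcf_gg:
  assumes "rho > 0" "r > 0"
  shows "stepPCF d N rho r = 1 - (1/N) * ((pi * rho^2) powr (real d / 2) * gg (real d / 2) (4 * pi^2 * rho^2 * r^2))"
proof -
  have b: "besselJ (real d / 2) (2 * pi * rho * r) = (pi * rho * r) powr (real d / 2) * gg (real d / 2) (4 * pi^2 * rho^2 * r^2)"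
    using bessel_gg[of "real d / 2" "2 * pi * rho * r"] assms by (simp add: power_mult_distrib mult.assoc)
  have "(rho / r) powr (real d / 2) * (pi * rho * r) powr (real d / 2) = ((rho / r) * (pi * rho * r)) powr (real d / 2)"
    using assms by (intro powr_mult[symmetric])
  also have "(rho / r) * (pi * rho * r) = pi * rho^2" using assms by (simp add: field_simps power2_eq_square)
  finally have p: "(rho / r) powr (real d / 2) * (pi * rho * r) powr (real d / 2) = (pi * rho^2) powr (real d / 2)" .
  show ?thesis unfolding stepPCF_def b
    by (simp add: p[symmetric] mult_ac)
qed

lemma A_eq:
  assumes "rho > 0"
  shows "(pi * rho^2) powr (real d / 2) = pi powr (real d / 2) * rho ^ d"
proof -
  have "(rho^2) powr (real d / 2) = (rho powr 2) powr (real d / 2)" using assms by (simp add: powr_realpow)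
  also have "\<dots> = rho powr (real d)" by (simp add: powr_powr)
  also have "\<dots> = rho ^ d" using assms by (simp add: powr_realpow)
  finally show ?thesis using assms by (simp add: powr_mult)
qed

lemma core:
  assumes "rho > 0" "N > 0"
  shows "realizable d N rho \<longleftrightarrow> pi powr (real d / 2) * rho ^ d / Gamma (1 + real d / 2) \<le> N"
proof -
  define nu where "nu = real d / 2"
  have nu0: "nu \<ge> 0" unfolding nu_def by simp
  define A where "A = (pi * rho^2) powr nu"
  have Apos: "A > 0" unfolding A_def using assms by simp
  have G0: "Gamma (nu + 1) > 0" using nu0 by (intro Gamma_real_pos) simp
  have AT: "pi powr (real d / 2) * rho ^ d / Gamma (1 + real d / 2) = A / Gamma (nu + 1)"
    unfolding A_def nu_def using A_eq[OF assms(1), of d] by (simp add: add.commute)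
  have pcf: "stepPCF d N rho r = 1 - (1/N) * (A * gg nu (4 * pi^2 * rho^2 * r^2))" if "r > 0" for r
    using pcf_gg[OF assms(1) that] unfolding A_def nu_def by simp
  show ?thesis unfolding AT
  proof
    assume R: "realizable d N rho"
    show "A / Gamma (nu + 1) \<le> N"
    proof (rule ccontr)
      assume "\<not> ?thesis"
      then have lt: "N < A / Gamma (nu + 1)" by simp
      define e where "e = (A / Gamma (nu + 1) - N) / A"
      have epos: "e > 0" unfolding e_def using lt Apos by simp
      have "isCont (gg nu) 0" by (rule DERIV_isCont[OF d0[OF nu0]])
      then have "\<forall>e>0. \<exists>d>0. \<forall>x'. dist x' 0 < d \<longrightarrow> dist (gg nu x') (gg nu 0) < e"
        by (simp only: continuous_at_eps_delta)
      then obtain dl where dl: "dl > 0" "\<And>y. dist y 0 < dl \<Longrightarrow> dist (gg nu y) (gg nu 0) < e"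
        using epos by blast
      define r where "r = sqrt dl / (4 * pi * rho)"
      have rpos: "r > 0" unfolding r_def using dl assms by simp
      have y: "4 * pi^2 * rho^2 * r^2 = dl / 4"
        unfolding r_def using dl assms by (simp add: power_divide power_mult_distrib field_simps)
      have "dist (gg nu (dl/4)) (gg nu 0) < e" using dl by (intro dl(2)) simp
      then have "gg nu (dl/4) > 1 / Gamma (nu + 1) - e" unfolding gg0 dist_real_def by linarith
      then have "A * gg nu (dl/4) > A * (1 / Gamma (nu + 1) - e)" using Apos by simp
      also have "A * (1 / Gamma (nu + 1) - e) = N" unfolding e_def using Apos by (simp add: field_simps)
      finally have "A * gg nu (dl/4) > N" .
      then have "(1/N) * (A * gg nu (dl/4)) > 1" using assms(2) by (simp add: field_simps)
      then have "stepPCF d N rho r < 0" using pcf[OF rpos] y by simp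
      then show False using R rpos unfolding realizable_def by force
    qed
  next
    assume le: "A / Gamma (nu + 1) \<le> N"
    show "realizable d N rho" unfolding realizable_def
    proof (intro conjI allI impI)
      fix r :: real assume r: "r > 0"
      have "gg nu (4 * pi^2 * rho^2 * r^2) \<le> 1 / Gamma (nu + 1)"
        using nu0 by (intro gg_bound) auto
      then have "A * gg nu (4 * pi^2 * rho^2 * r^2) \<le> A * (1 / Gamma (nu + 1))"
        using Apos by (intro mult_left_mono) auto
      also have "\<dots> \<le> N" using le by simp
      finally have "(1/N) * (A * gg nu (4 * pi^2 * rho^2 * r^2)) \<le> 1" using assms(2) by (simp add: field_simps)
      then show "0 \<le> stepPCF d N rho r" using pcf[OF r] by simp
    qed (rule assms(1))
  qed
qed

theorem lemma5:
  fixes d :: nat and N :: real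
  assumes "d \<ge> 1" and "N > 0"
  shows "realizable d N ((N * Gamma (1 + real d / 2) / pi powr (real d / 2)) powr (1 / real d))
       \<and> (\<forall>rho. realizable d N rho \<longrightarrow>
              rho \<le> (N * Gamma (1 + real d / 2) / pi powr (real d / 2)) powr (1 / real d))
       \<and> (\<forall>rho>0. realizable d (pi powr (real d / 2) * rho ^ d / Gamma (1 + real d / 2)) rho
           \<and> (\<forall>M>0. realizable d M rho \<longrightarrow>
                  pi powr (real d / 2) * rho ^ d / Gamma (1 + real d / 2) \<le> M))"
proof -
  define G where "G = Gamma (1 + real d / 2)"
  define P where "P = pi powr (real d / 2)"
  have Gpos: "G > 0" unfolding G_def by (intro Gamma_real_pos) simp
  have Ppos: "P > 0" unfolding P_def by simp
  define Q where "Q = N * G / P"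
  have Qpos: "Q > 0" unfolding Q_def using Gpos Ppos assms(2) by simp
  define rs where "rs = Q powr (1 / real d)"
  have rspos: "rs > 0" unfolding rs_def using Qpos by simp
  have "rs ^ d = rs powr (real d)" using rspos by (simp add: powr_realpow)
  also have "\<dots> = Q powr (1 / real d * real d)" unfolding rs_def by (simp add: powr_powr)
  also have "\<dots> = Q" using assms(1) Qpos by simp
  finally have rsd: "rs ^ d = Q" .
  have Trs: "P * rs ^ d / G = N" unfolding rsd Q_def using Gpos Ppos by simp
  have p1: "realizable d N rs"
    using core[OF rspos assms(2), of d] Trs unfolding P_def G_def by simp
  have p2: "rho \<le> rs" if R: "realizable d N rho" for rho
  proof (rule ccontr)
    assume "\<not> rho \<le> rs"
    then have lt: "rs < rho" by simp
    have rho0: "rho > 0" using R unfolding realizable_def by simp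
    have le: "P * rho ^ d / G \<le> N" using core[OF rho0 assms(2), of d] R unfolding P_def G_def by simp
    have "rs ^ d < rho ^ d" using lt rspos assms(1) by (intro power_strict_mono) auto
    then have "P * rs ^ d / G < P * rho ^ d / G" using Ppos Gpos by (simp add: divide_strict_right_mono)
    then show False using le Trs by simp
  qed
  have p3: "realizable d (P * rho ^ d / G) rho \<and> (\<forall>M>0. realizable d M rho \<longrightarrow> P * rho ^ d / G \<le> M)"
    if rho0: "rho > 0" for rho
  proof
    have T0: "P * rho ^ d / G > 0" using Ppos Gpos rho0 by simp
    show "realizable d (P * rho ^ d / G) rho"
      using core[OF rho0 T0, of d] unfolding P_def G_def by simp
    show "\<forall>M>0. realizable d M rho \<longrightarrow> P * rho ^ d / G \<le> M"
      using core[OF rho0, of _ d] unfolding P_def G_def by simp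
  qed
  show ?thesis using p1 p2 p3 unfolding rs_def Q_def P_def G_def by blast
qed

end
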